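(* Let $G$ be a connected graph of order $n_G$ and let $H$ be a connected subgraph of $G$ of order $n_H$. Then for each integer $k$ with $3\le k\le n_H$ we have $px_k(G)\le px_k(H)+n_G-n_H$, and for each integer $k$ with $n_H\le k\le n_G$ we have $px_k(G)\le px_{n_H}(H)+n_G-n_H$.
   Context: All graphs are finite, simple and undirected. An edge-coloring of a graph assigns colors to edges, adjacent edges being allowed to share a color. A tree $T$ in an edge-colored graph is a proper tree if no two adjacent edges of $T$ receive the same color. For a connected graph $G$ of order $n$, an integer $k$ with $2\le k\le n$ and a set $S\subseteq V(G)$, an $S$-tree is a tree in $G$ containing all vertices of $S$. An edge-coloring of $G$ is a $k$-proper coloring if for every $k$-element subset $S\subseteq V(G)$ there is a proper $S$-tree in $G$. The $k$-proper index $px_k(G)$ is the minimum number of colors in a $k$-proper coloring of $G$. *)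

theory Defs
  imports Main
begin

definition graph :: "'a set \<Rightarrow> 'a set set \<Rightarrow> bool" where
  "graph V E \<longleftrightarrow> finite V \<and> (\<forall>e\<in>E. e \<subseteq> V \<and> card e = 2)"

definition adj_rel :: "'a set set \<Rightarrow> ('a \<times> 'a) set" where
  "adj_rel E = {(x, y). {x, y} \<in> E}"

definition connected_graph :: "'a set \<Rightarrow> 'a set set \<Rightarrow> bool" where
  "connected_graph V E \<longleftrightarrow> graph V E \<and> V \<noteq> {} \<and>
     (\<forall>u\<in>V. \<forall>v\<in>V. (u, v) \<in> (adj_rel E)\<^sup>*)"

definition subgraph :: "'a set \<Rightarrow> 'a set set \<Rightarrow> 'a set \<Rightarrow> 'a set set \<Rightarrow> bool" where
  "subgraph VH EH V E \<longleftrightarrow> graph VH EH \<and> VH \<subseteq> V \<and> EH \<subseteq> E"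

definition is_cycle :: "'a set set \<Rightarrow> 'a list \<Rightarrow> bool" where
  "is_cycle E xs \<longleftrightarrow> length xs \<ge> 3 \<and> distinct xs \<and>
     (\<forall>i < length xs. {xs ! i, xs ! ((i + 1) mod length xs)} \<in> E)"

definition acyclic_graph :: "'a set set \<Rightarrow> bool" where
  "acyclic_graph E \<longleftrightarrow> (\<nexists>xs. is_cycle E xs)"

definition tree_in :: "'a set \<Rightarrow> 'a set set \<Rightarrow> 'a set \<Rightarrow> 'a set set \<Rightarrow> bool" where
  "tree_in V E VT ET \<longleftrightarrow> subgraph VT ET V E \<and> connected_graph VT ET \<and> acyclic_graph ET"

definition proper_edges :: "('a set \<Rightarrow> nat) \<Rightarrow> 'a set set \<Rightarrow> bool" where
  "proper_edges c ET \<longleftrightarrow>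
     (\<forall>e\<in>ET. \<forall>f\<in>ET. e \<noteq> f \<and> e \<inter> f \<noteq> {} \<longrightarrow> c e \<noteq> c f)"

definition k_proper_coloring :: "'a set \<Rightarrow> 'a set set \<Rightarrow> nat \<Rightarrow> ('a set \<Rightarrow> nat) \<Rightarrow> bool" where
  "k_proper_coloring V E k c \<longleftrightarrow>
     (\<forall>S. S \<subseteq> V \<and> card S = k \<longrightarrow>
        (\<exists>VT ET. S \<subseteq> VT \<and> tree_in V E VT ET \<and> proper_edges c ET))"

definition px :: "'a set \<Rightarrow> 'a set set \<Rightarrow> nat \<Rightarrow> nat" where
  "px V E k = (LEAST m. \<exists>c. card (c ` E) = m \<and> k_proper_coloring V E k c)"

end

theory Submission
  imports Defs
begin


lemma adj_rel_iff[simp]: "(x,y) \<in> adj_rel E \<longleftrightarrow> {x,y} \<in> E"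
  by (simp add: adj_rel_def)

lemma sym_adj: "sym (adj_rel E)"
  unfolding sym_def adj_rel_def by (auto simp: insert_commute)

lemma rtrancl_adj_sym: "(x,y) \<in> (adj_rel E)\<^sup>* \<Longrightarrow> (y,x) \<in> (adj_rel E)\<^sup>*"
  using sym_rtrancl[OF sym_adj[of E]] unfolding sym_def by blast

lemma adj_rel_mono: "E \<subseteq> F \<Longrightarrow> adj_rel E \<subseteq> adj_rel F"
  unfolding adj_rel_def by auto

lemma proper_mono: "proper_edges c F \<Longrightarrow> F' \<subseteq> F \<Longrightarrow> proper_edges c F'"
  unfolding proper_edges_def by blast

lemma cycle_remove_conn:
  assumes cyc: "is_cycle F xs"
  shows "(xs!1, xs!0) \<in> (adj_rel (F - {{xs!0, xs!1}}))\<^sup>*"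
proof -
  let ?n = "length xs" let ?R = "adj_rel (F - {{xs!0, xs!1}})"
  have n3: "?n \<ge> 3" and d: "distinct xs" and ed: "\<forall>i<?n. {xs!i, xs!((i+1) mod ?n)} \<in> F"
    using cyc unfolding is_cycle_def by auto
  have neq: "{xs!i, xs!j} \<noteq> {xs!0, xs!1}"
    if "i < ?n" "j < ?n" "\<not> ((i=0 \<and> j=1) \<or> (i=1 \<and> j=0))" for i j
  proof -
    have inj: "\<And>a b. a < ?n \<Longrightarrow> b < ?n \<Longrightarrow> xs!a = xs!b \<longleftrightarrow> a = b"
      using d nth_eq_iff_index_eq by blast
    have "0 < ?n" "1 < ?n" using n3 by auto
    then show ?thesis using that inj[of i 0] inj[of i 1] inj[of j 0] inj[of j 1]
      by (auto simp: doubleton_eq_iff)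
  qed
  have path: "1 \<le> i \<Longrightarrow> i < ?n \<Longrightarrow> (xs!1, xs!i) \<in> ?R\<^sup>*" for i
  proof (induction i)
    case 0 thus ?case by simp
  next
    case (Suc i)
    show ?case
    proof (cases "i = 0")
      case True thus ?thesis by simp
    next
      case False
      then have IH: "(xs!1, xs!i) \<in> ?R\<^sup>*" using Suc by auto
      have m: "(i+1) mod ?n = Suc i" using Suc.prems by simp
      have "{xs!i, xs!(Suc i)} \<in> F" using ed Suc.prems m by (metis Suc_lessD)
      moreover have "{xs!i, xs!(Suc i)} \<noteq> {xs!0, xs!1}" using neq[of i "Suc i"] Suc.prems False by auto
      ultimately have "(xs!i, xs!Suc i) \<in> ?R" by simp
      with IH show ?thesis by (rule rtrancl_into_rtrancl)
    qed
  qed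
  have a: "(xs!1, xs!(?n-1)) \<in> ?R\<^sup>*" using path n3 by auto
  have "?n - 1 + 1 = ?n" using n3 by simp
  then have m: "((?n-1)+1) mod ?n = 0" by simp
  then have "{xs!(?n-1), xs!0} \<in> F" using ed n3 by (metis diff_less zero_less_numeral less_le_trans zero_less_one)
  moreover have "{xs!(?n-1), xs!0} \<noteq> {xs!0, xs!1}" proof -
    have "?n - 1 \<noteq> 1" "?n - 1 < ?n" "0 < ?n" using n3 by auto
    then show ?thesis using neq[of "?n-1" 0] by auto
  qed
  ultimately have "(xs!(?n-1), xs!0) \<in> ?R" by simp
  with a show ?thesis by (rule rtrancl_into_rtrancl)
qed

lemma spanning:
  "connected_graph W F \<Longrightarrow> \<exists>F'\<subseteq>F. connected_graph W F' \<and> acyclic_graph F'"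
proof (induction "card F" arbitrary: F rule: less_induct)
  case less
  show ?case
  proof (cases "acyclic_graph F")
    case True thus ?thesis using less.prems by blast
  next
    case False
    then obtain xs where cyc: "is_cycle F xs" unfolding acyclic_graph_def by blast
    let ?e = "{xs!0, xs!1}"
    let ?F = "F - {?e}"
    have n3: "length xs \<ge> 3" using cyc unfolding is_cycle_def by auto
    have ed: "\<forall>i<length xs. {xs!i, xs!((i+1) mod length xs)} \<in> F" using cyc unfolding is_cycle_def by blast
    have "(0::nat) < length xs" using n3 by linarith
    then have "{xs!0, xs!((0+1) mod length xs)} \<in> F" using ed by blast
    moreover have "(0+1) mod length xs = 1" using n3 by simp
    ultimately have eF: "?e \<in> F" by simp
    have finF: "finite F" using less.prems unfolding connected_graph_def graph_def
      by (meson PowI finite_Pow_iff finite_subset subsetI)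
    have lt: "card ?F < card F" by (rule card_Diff1_less[OF finF eF])
    have sub: "adj_rel F \<subseteq> (adj_rel ?F)\<^sup>*"
    proof
      fix p assume "p \<in> adj_rel F"
      then obtain a b where p: "p = (a,b)" "{a,b} \<in> F" by (cases p) auto
      show "p \<in> (adj_rel ?F)\<^sup>*"
      proof (cases "{a,b} = ?e")
        case False
        then have "{a,b} \<in> ?F" using p by blast
        then have "(a,b) \<in> adj_rel ?F" by simp
        thus ?thesis using p by blast
      next
        case True
        have c1: "(xs!1, xs!0) \<in> (adj_rel ?F)\<^sup>*" by (rule cycle_remove_conn[OF cyc])
        then have c2: "(xs!0, xs!1) \<in> (adj_rel ?F)\<^sup>*" by (rule rtrancl_adj_sym)
        from True have "(a = xs!0 \<and> b = xs!1) \<or> (a = xs!1 \<and> b = xs!0)" by (simp add: doubleton_eq_iff)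
        thus ?thesis using c1 c2 p by auto
      qed
    qed
    have conn: "connected_graph W ?F"
      using less.prems rtrancl_subset_rtrancl[OF sub] unfolding connected_graph_def graph_def by blast
    from less.hyps[OF lt conn] show ?thesis by blast
  qed
qed



lemma graph_finE: "graph V E \<Longrightarrow> finite E"
  unfolding graph_def by (meson PowI finite_Pow_iff finite_subset subsetI)

lemma exists_coloring: assumes h: "connected_graph V E" shows "\<exists>c. k_proper_coloring V E k c"
proof -
  obtain F where F: "F \<subseteq> E" "connected_graph V F" "acyclic_graph F" using spanning[OF h] by blast
  have finE: "finite E" using h graph_finE unfolding connected_graph_def by blast
  obtain f :: "'a set \<Rightarrow> nat" and n where "inj_on f E" using finite_imp_inj_to_nat_seg[OF finE] by blast
  have "tree_in V E V F" unfolding tree_in_def subgraph_def using F h unfolding connected_graph_def by auto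
  moreover have "proper_edges f F" using \<open>inj_on f E\<close> F(1) unfolding proper_edges_def inj_on_def by blast
  ultimately show ?thesis unfolding k_proper_coloring_def by blast
qed

lemma px_attained: assumes "connected_graph V E"
  shows "\<exists>c. card (c ` E) = px V E k \<and> k_proper_coloring V E k c"
proof -
  have "\<exists>m c. card (c ` E) = m \<and> k_proper_coloring V E k c" using exists_coloring[OF assms] by blast
  from LeastI_ex[OF this] show ?thesis unfolding px_def .
qed

lemma px_le: "k_proper_coloring V E k c \<Longrightarrow> px V E k \<le> card (c ` E)"
  unfolding px_def by (rule Least_le) blast

lemma px_base: assumes "connected_graph V EH" "graph V E" "EH \<subseteq> E" shows "px V E k \<le> px V EH k"
proof -
  obtain c where c: "card (c ` EH) = px V EH k" "k_proper_coloring V EH k c" using px_attained assms(1) by blast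
  show ?thesis
  proof (cases "EH = {}")
    case True
    have "E = {}"
    proof (rule ccontr)
      assume "E \<noteq> {}" then obtain e where "e\<in>E" by blast
      then have "e \<subseteq> V" "card e = 2" using assms(2) unfolding graph_def by auto
      then obtain a b where "e = {a,b}" "a \<noteq> b" by (meson card_2_iff)
      have "(a,b) \<in> (adj_rel EH)\<^sup>*" using assms(1) \<open>e\<subseteq>V\<close> \<open>e = {a,b}\<close> unfolding connected_graph_def by auto
      moreover have "adj_rel EH = {}" using True unfolding adj_rel_def by auto
      ultimately show False using \<open>a\<noteq>b\<close> by simp
    qed
    with True show ?thesis by simp
  next
    case False
    then obtain e1 where e1: "e1 \<in> EH" by blast
    define c' where "c' e = (if e \<in> EH then c e else c e1)" for e
    have img: "c' ` E = c ` EH" using e1 assms(3) unfolding c'_def by force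
    have "k_proper_coloring V E k c'"
      unfolding k_proper_coloring_def
    proof (intro allI impI)
      fix S assume "S \<subseteq> V \<and> card S = k"
      then obtain VT ET where T: "S \<subseteq> VT" "tree_in V EH VT ET" "proper_edges c ET"
        using c(2) unfolding k_proper_coloring_def by blast
      have "tree_in V E VT ET" using T(2) assms(3) unfolding tree_in_def subgraph_def by auto
      moreover have "ET \<subseteq> EH" using T(2) unfolding tree_in_def subgraph_def by auto
      then have "proper_edges c' ET" using T(3) unfolding proper_edges_def c'_def by auto
      ultimately show "\<exists>VT ET. S \<subseteq> VT \<and> tree_in V E VT ET \<and> proper_edges c' ET" using T(1) by blast
    qed
    then show ?thesis using px_le c(1) img by metis
  qed
qed

lemma cross: "(x,y) \<in> R\<^sup>* \<Longrightarrow> x \<in> A \<Longrightarrow> y \<notin> A \<Longrightarrow> \<exists>a b. (a,b) \<in> R \<and> a \<in> A \<and> b \<notin> A"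
  by (induction rule: rtrancl_induct) auto

lemma conn_extend:
  assumes "connected_graph VT ET" "u \<in> VT" "w \<notin> VT"
  shows "connected_graph (insert w VT) (insert {u,w} ET)"
proof -
  let ?V = "insert w VT" and ?E = "insert {u,w} ET"
  have uw: "u \<noteq> w" using assms by auto
  have g: "graph ?V ?E" using assms(1,2) uw unfolding connected_graph_def graph_def by auto
  have mono: "(adj_rel ET)\<^sup>* \<subseteq> (adj_rel ?E)\<^sup>*" by (rule rtrancl_mono[OF adj_rel_mono]) auto
  have toU: "(x,u) \<in> (adj_rel ?E)\<^sup>*" if "x \<in> ?V" for x
  proof (cases "x = w")
    case True
    have "(w,u) \<in> adj_rel ?E" by (simp add: insert_commute)
    thus ?thesis using True by blast
  next
    case False
    then have "(x,u) \<in> (adj_rel ET)\<^sup>*" using that assms(1,2) unfolding connected_graph_def by auto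
    thus ?thesis using mono by blast
  qed
  have "(x,y) \<in> (adj_rel ?E)\<^sup>*" if "x \<in> ?V" "y \<in> ?V" for x y
    using toU[OF that(1)] rtrancl_adj_sym[OF toU[OF that(2)]] by (rule rtrancl_trans)
  then show ?thesis using g unfolding connected_graph_def by auto
qed

lemma extend_tree:
  assumes u: "u \<in> VH" and w: "w \<notin> VH"
    and T: "tree_in VH EH VT ET" "u \<in> VT" "proper_edges c ET"
    and c': "\<forall>e\<in>EH. c' e = c e" "\<forall>e\<in>EH. c' {u,w} \<noteq> c' e"
  shows "\<exists>VT' ET'. insert w VT \<subseteq> VT' \<and> tree_in (insert w VH) (insert {u,w} EH) VT' ET' \<and> proper_edges c' ET'"
proof -
  have sub: "VT \<subseteq> VH" "ET \<subseteq> EH" and cT: "connected_graph VT ET"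
    using T(1) unfolding tree_in_def subgraph_def by auto
  have w': "w \<notin> VT" using sub w by auto
  have conn: "connected_graph (insert w VT) (insert {u,w} ET)" by (rule conn_extend[OF cT T(2) w'])
  obtain F where F: "F \<subseteq> insert {u,w} ET" "connected_graph (insert w VT) F" "acyclic_graph F"
    using spanning[OF conn] by blast
  have "tree_in (insert w VH) (insert {u,w} EH) (insert w VT) F"
    using F sub unfolding tree_in_def subgraph_def connected_graph_def by auto
  moreover have "proper_edges c' (insert {u,w} ET)"
    unfolding proper_edges_def
  proof (intro ballI impI)
    fix e f assume ef: "e \<in> insert {u,w} ET" "f \<in> insert {u,w} ET" "e \<noteq> f \<and> e \<inter> f \<noteq> {}"
    show "c' e \<noteq> c' f"
    proof (cases "e = {u,w}")
      case True
      then have "f \<in> EH" using ef sub by auto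
      thus ?thesis using True c'(2) by auto
    next
      case False
      then have e: "e \<in> ET" using ef by auto
      show ?thesis
      proof (cases "f = {u,w}")
        case True
        have "e \<in> EH" using e sub by auto
        thus ?thesis using True c'(2) by metis
      next
        case False
        then have "f \<in> ET" using ef by auto
        have "c e \<noteq> c f" using e \<open>f \<in> ET\<close> ef(3) T(3) unfolding proper_edges_def by blast
        moreover have "c' e = c e" "c' f = c f" using e \<open>f \<in> ET\<close> c'(1) sub by auto
        ultimately show ?thesis by simp
      qed
    qed
  qed
  then have "proper_edges c' F" using F(1) by (rule proper_mono)
  ultimately show ?thesis by blast
qed



lemma pad: assumes "finite B" "A \<subseteq> B" "card A \<le> n" "n \<le> card B"
  shows "\<exists>C. A \<subseteq> C \<and> C \<subseteq> B \<and> card C = n"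
proof -
  have fA: "finite A" using assms finite_subset by blast
  have "card (B - A) = card B - card A" using assms fA by (simp add: card_Diff_subset)
  then have "n - card A \<le> card (B - A)" using assms by simp
  then obtain D where D: "D \<subseteq> B - A" "card D = n - card A" "finite D"
    by (rule obtain_subset_with_card_n)
  have "card (A \<union> D) = card A + card D" using D fA by (subst card_Un_disjoint) auto
  then show ?thesis using D assms by (intro exI[of _ "A \<union> D"]) auto
qed

lemma color_step:
  assumes H: "connected_graph VH EH" and u: "u \<in> VH" and w: "w \<notin> VH"
    and kp: "k_proper_coloring VH EH j c"
    and cond: "\<forall>S. S \<subseteq> insert w VH \<and> card S = k \<longrightarrow>
       (w \<notin> S \<and> card S = j) \<or> (w \<in> S \<and> (\<exists>S2. S - {w} \<subseteq> S2 \<and> u \<in> S2 \<and> S2 \<subseteq> VH \<and> card S2 = j))"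
  shows "\<exists>c'. card (c' ` insert {u,w} EH) = card (c ` EH) + 1 \<and>
             k_proper_coloring (insert w VH) (insert {u,w} EH) k c'"
proof -
  have finE: "finite EH" using H graph_finE unfolding connected_graph_def by blast
  define N where "N = Suc (Max (insert 0 (c ` EH)))"
  define c' where "c' e = (if e = {u,w} then N else c e)" for e
  have Nn: "N \<notin> c ` EH"
  proof
    assume "N \<in> c ` EH"
    then have "N \<in> insert 0 (c ` EH)" by blast
    moreover have "finite (insert 0 (c ` EH))" using finE by blast
    ultimately have "N \<le> Max (insert 0 (c ` EH))" by (rule Max_ge[rotated])
    thus False unfolding N_def by simp
  qed
  have notin: "{u,w} \<notin> EH"
  proof
    assume "{u,w} \<in> EH"
    then have "{u,w} \<subseteq> VH" using H unfolding connected_graph_def graph_def by blast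
    thus False using w by blast
  qed
  have agree: "\<forall>e\<in>EH. c' e = c e" using notin unfolding c'_def by auto
  have diff: "\<forall>e\<in>EH. c' {u,w} \<noteq> c' e"
  proof
    fix e assume "e \<in> EH"
    then have "c' e = c e" "c e \<in> c ` EH" using agree by auto
    moreover have "c' {u,w} = N" unfolding c'_def by simp
    ultimately show "c' {u,w} \<noteq> c' e" using Nn by metis
  qed
  have img: "c' ` insert {u,w} EH = insert N (c ` EH)"
  proof -
    have "c' ` EH = c ` EH" using agree by (intro image_cong) auto
    moreover have "c' {u,w} = N" unfolding c'_def by simp
    ultimately show ?thesis by simp
  qed
  have card: "card (c' ` insert {u,w} EH) = card (c ` EH) + 1"
    unfolding img using Nn finE by (simp add: card_insert_disjoint)
  have "k_proper_coloring (insert w VH) (insert {u,w} EH) k c'"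
    unfolding k_proper_coloring_def
  proof (intro allI impI)
    fix S assume S: "S \<subseteq> insert w VH \<and> card S = k"
    show "\<exists>VT ET. S \<subseteq> VT \<and> tree_in (insert w VH) (insert {u, w} EH) VT ET \<and> proper_edges c' ET"
    proof (cases "w \<in> S")
      case False
      have "(w \<notin> S \<and> card S = j) \<or> (w \<in> S \<and> (\<exists>S2. S - {w} \<subseteq> S2 \<and> u \<in> S2 \<and> S2 \<subseteq> VH \<and> card S2 = j))"
        using cond S by blast
      then have cS: "card S = j" using False by blast
      have "S \<subseteq> VH" using S False by blast
      then have "S \<subseteq> VH \<and> card S = j" using cS by blast
      from kp[unfolded k_proper_coloring_def, rule_format, OF this]
      obtain VT ET where T: "S \<subseteq> VT" "tree_in VH EH VT ET" "proper_edges c ET" by blast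
      have "tree_in (insert w VH) (insert {u, w} EH) VT ET" using T(2)
        unfolding tree_in_def subgraph_def by auto
      moreover have "ET \<subseteq> EH" using T(2) unfolding tree_in_def subgraph_def by auto
      then have "\<forall>e\<in>ET. c' e = c e" using agree by blast
      then have "proper_edges c' ET" using T(3) unfolding proper_edges_def by simp
      ultimately show ?thesis using T(1) by (intro exI conjI)
    next
      case True
      have "(w \<notin> S \<and> card S = j) \<or> (w \<in> S \<and> (\<exists>S2. S - {w} \<subseteq> S2 \<and> u \<in> S2 \<and> S2 \<subseteq> VH \<and> card S2 = j))"
        using cond S by blast
      then obtain S2 where S2: "S - {w} \<subseteq> S2" "u \<in> S2" "S2 \<subseteq> VH" "card S2 = j" using True by blast
      then have "S2 \<subseteq> VH \<and> card S2 = j" by blast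
      from kp[unfolded k_proper_coloring_def, rule_format, OF this]
      obtain VT ET where T: "S2 \<subseteq> VT" "tree_in VH EH VT ET" "proper_edges c ET" by blast
      have uT: "u \<in> VT" using T(1) S2(2) by blast
      obtain VT' ET' where X: "insert w VT \<subseteq> VT'" "tree_in (insert w VH) (insert {u,w} EH) VT' ET'" "proper_edges c' ET'"
        using extend_tree[OF u w T(2) uT T(3) agree diff] by blast
      have "S \<subseteq> insert w VT" using S2(1) T(1) by auto
      then have "S \<subseteq> VT'" using X(1) by (rule subset_trans)
      then show ?thesis using X(2,3) by (intro exI conjI)
    qed
  qed
  with card show ?thesis by blast
qed

lemma px_step1:
  assumes H: "connected_graph VH EH" and u: "u \<in> VH" and w: "w \<notin> VH" and k: "k \<le> card VH"
  shows "px (insert w VH) (insert {u,w} EH) k \<le> px VH EH k + 1"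
proof -
  obtain c where c: "card (c ` EH) = px VH EH k" "k_proper_coloring VH EH k c" using px_attained[OF H] by blast
  have finV: "finite VH" using H unfolding connected_graph_def graph_def by auto
  have cond: "\<forall>S. S \<subseteq> insert w VH \<and> card S = k \<longrightarrow>
       (w \<notin> S \<and> card S = k) \<or> (w \<in> S \<and> (\<exists>S2. S - {w} \<subseteq> S2 \<and> u \<in> S2 \<and> S2 \<subseteq> VH \<and> card S2 = k))"
  proof (intro allI impI)
    fix S assume S: "S \<subseteq> insert w VH \<and> card S = k"
    show "(w \<notin> S \<and> card S = k) \<or> (w \<in> S \<and> (\<exists>S2. S - {w} \<subseteq> S2 \<and> u \<in> S2 \<and> S2 \<subseteq> VH \<and> card S2 = k))"
    proof (cases "w \<in> S")
      case False thus ?thesis using S by auto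
    next
      case True
      have fS: "finite S" using S finV finite_subset by blast
      have "card (S - {w}) = k - 1" using True S fS by simp
      moreover have "k > 0" using True fS S card_gt_0_iff by blast
      ultimately have "card (insert u (S - {w})) \<le> k" by (intro card_insert_le_m1) auto
      moreover have "insert u (S - {w}) \<subseteq> VH" using S u by auto
      ultimately obtain S2 where "insert u (S - {w}) \<subseteq> S2" "S2 \<subseteq> VH" "card S2 = k"
        using pad[OF finV _ _ k] by blast
      thus ?thesis using True by blast
    qed
  qed
  obtain c' where "card (c' ` insert {u,w} EH) = card (c ` EH) + 1"
      "k_proper_coloring (insert w VH) (insert {u,w} EH) k c'"
    using color_step[OF H u w c(2) cond] by blast
  thus ?thesis using px_le c(1) by metis
qed

lemma px_step2:
  assumes H: "connected_graph VH EH" and u: "u \<in> VH" and w: "w \<notin> VH"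
  shows "px (insert w VH) (insert {u,w} EH) (Suc (card VH)) \<le> px VH EH (card VH) + 1"
proof -
  obtain c where c: "card (c ` EH) = px VH EH (card VH)" "k_proper_coloring VH EH (card VH) c"
    using px_attained[OF H] by blast
  have finV: "finite VH" using H unfolding connected_graph_def graph_def by auto
  have cond: "\<forall>S. S \<subseteq> insert w VH \<and> card S = Suc (card VH) \<longrightarrow>
       (w \<notin> S \<and> card S = card VH) \<or> (w \<in> S \<and> (\<exists>S2. S - {w} \<subseteq> S2 \<and> u \<in> S2 \<and> S2 \<subseteq> VH \<and> card S2 = card VH))"
  proof (intro allI impI)
    fix S assume S: "S \<subseteq> insert w VH \<and> card S = Suc (card VH)"
    have "card (insert w VH) = Suc (card VH)" using finV w by simp
    then have "S = insert w VH" using S finV by (metis card_subset_eq finite_insert)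
    thus "(w \<notin> S \<and> card S = card VH) \<or> (w \<in> S \<and> (\<exists>S2. S - {w} \<subseteq> S2 \<and> u \<in> S2 \<and> S2 \<subseteq> VH \<and> card S2 = card VH))"
      using u by auto
  qed
  obtain c' where "card (c' ` insert {u,w} EH) = card (c ` EH) + 1"
      "k_proper_coloring (insert w VH) (insert {u,w} EH) (Suc (card VH)) c'"
    using color_step[OF H u w c(2) cond] by blast
  thus ?thesis using px_le c(1) by metis
qed

lemma main:
  assumes G: "connected_graph V E"
  shows "connected_graph VH EH \<Longrightarrow> subgraph VH EH V E \<Longrightarrow>
    (\<forall>k. k \<le> card VH \<longrightarrow> px V E k \<le> px VH EH k + (card V - card VH)) \<and>
    (\<forall>k. card VH \<le> k \<and> k \<le> card V \<longrightarrow> px V E k \<le> px VH EH (card VH) + (card V - card VH))"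
proof (induction "card (V - VH)" arbitrary: VH EH rule: less_induct)
  case less
  have finV: "finite V" using G unfolding connected_graph_def graph_def by auto
  have sub: "VH \<subseteq> V" "EH \<subseteq> E" using less.prems unfolding subgraph_def by auto
  show ?case
  proof (cases "VH = V")
    case True
    have "px V E k \<le> px V EH k" for k
      using px_base[of V EH E] less.prems G True sub unfolding connected_graph_def by auto
    then show ?thesis using True by auto
  next
    case False
    then obtain y where y: "y \<in> V" "y \<notin> VH" using sub by auto
    obtain x where x: "x \<in> VH" using less.prems unfolding connected_graph_def by auto
    have "(x,y) \<in> (adj_rel E)\<^sup>*" using G x y sub unfolding connected_graph_def by auto
    then obtain u w where "(u,w) \<in> adj_rel E" "u \<in> VH" "w \<notin> VH" using cross[of x y _ VH] x y by blast
    then have uw: "{u,w} \<in> E" "u \<in> VH" "w \<notin> VH" by auto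
    have wV: "w \<in> V" using uw(1) G unfolding connected_graph_def graph_def by auto
    let ?VH = "insert w VH" and ?EH = "insert {u,w} EH"
    have conn': "connected_graph ?VH ?EH" by (rule conn_extend[OF less.prems(1) uw(2,3)])
    have sub': "subgraph ?VH ?EH V E" using conn' sub wV uw unfolding subgraph_def connected_graph_def by auto
    have "V - ?VH = (V - VH) - {w}" by auto
    then have lt: "card (V - ?VH) < card (V - VH)" using finV wV uw(3)
      by (metis DiffI card_Diff1_less finite_Diff)
    note IH = less.hyps[OF lt conn' sub']
    have finH: "finite VH" using finV sub finite_subset by blast
    have cH': "card ?VH = Suc (card VH)" using finH uw(3) by simp
    have le': "card ?VH \<le> card V" using finV wV sub by (intro card_mono) auto
    have s1: "k \<le> card VH \<Longrightarrow> px ?VH ?EH k \<le> px VH EH k + 1" for k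
      by (rule px_step1[OF less.prems(1) uw(2,3)])
    have s2: "px ?VH ?EH (Suc (card VH)) \<le> px VH EH (card VH) + 1"
      by (rule px_step2[OF less.prems(1) uw(2,3)])
    have P1: "\<forall>k. k \<le> card VH \<longrightarrow> px V E k \<le> px VH EH k + (card V - card VH)"
    proof (intro allI impI)
      fix k assume k: "k \<le> card VH"
      have "px V E k \<le> px ?VH ?EH k + (card V - card ?VH)" using IH k cH' by auto
      thus "px V E k \<le> px VH EH k + (card V - card VH)" using s1[OF k] cH' le' by linarith
    qed
    have P2: "\<forall>k. card VH \<le> k \<and> k \<le> card V \<longrightarrow> px V E k \<le> px VH EH (card VH) + (card V - card VH)"
    proof (intro allI impI)
      fix k assume k: "card VH \<le> k \<and> k \<le> card V"
      show "px V E k \<le> px VH EH (card VH) + (card V - card VH)"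
      proof (cases "k = card VH")
        case True thus ?thesis using P1 by auto
      next
        case False
        then have "px V E k \<le> px ?VH ?EH (card ?VH) + (card V - card ?VH)" using IH k cH' by auto
        then have "px V E k \<le> px ?VH ?EH (Suc (card VH)) + (card V - Suc (card VH))" unfolding cH' .
        moreover have "Suc (card VH) \<le> card V" using le' cH' by simp
        ultimately show ?thesis using s2 by linarith
      qed
    qed
    show ?thesis using P1 P2 by blast
  qed
qed

theorem lemma2p9:
  fixes V VH :: "'a set" and E EH :: "'a set set"
  assumes "connected_graph V E"
    and "subgraph VH EH V E"
    and "connected_graph VH EH"
  shows "(\<forall>k. 3 \<le> k \<and> k \<le> card VH \<longrightarrow>
            px V E k \<le> px VH EH k + card V - card VH)
       \<and> (\<forall>k. card VH \<le> k \<and> k \<le> card V \<longrightarrow>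
            px V E k \<le> px VH EH (card VH) + card V - card VH)"
proof -
  have le: "card VH \<le> card V" using assms unfolding subgraph_def connected_graph_def graph_def
    by (meson card_mono)
  from main[OF assms(1,3,2)] show ?thesis using le by auto
qed

end
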